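(* Fix $k\ge1$. Under the mean-field and homogeneity assumptions, the activation rate of the $k$ key nodes, \[ m_k(t)=\lim_{\Delta\downarrow0}\frac1\Delta\,\mathbb P\{\tau_k\le t+\Delta\mid\tau_k\ge t\}, \] satisfies \[ m_k(t)\approx\lambda(\hat a(t))\,\frac{p_{k-1}(t)}{1-p_k(t)}, \] where $p_j(t)$, $0\le j\le k$, is the probability that the time-inhomogeneous Markov chain on $\{0,\dots,k\}$ started at $0$, with jump rates $i\to i+1$ equal to $(k-i)\lambda(\hat a(t))$ ($0\le i\le k-1$) and $i\to i-1$ equal to $i\mu(\hat a(t))$ ($1\le i\le k-1$), state $k$ absorbing, is in state $j$ at time $t$ (equivalently, the solution of the corresponding Kolmogorov forward equations with $p_0(0)=1$, $p_1(0)=\dots=p_k(0)=0$).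
   Context: A signal network has $n$ aggregated nodes with state $\mathbf X(t)\in\{0,1\}^n$ (1 = active, 0 = passive), all passive at time $0$; nodes $1,\dots,k$ are key nodes, and $\tau_k=\inf\{t\ge0:X_1(t)=\dots=X_k(t)=1\}$. Node $i$ becomes active at rate $\lambda(a_i(t))$ and passive at rate $\mu(a_i(t))$, where $a_i(t)$ is the fraction of active neighbours of $i$, $\lambda$ decreasing and $\mu$ increasing; $\hat a(t)$ is the expected fraction of active nodes at time $t$. Mean-field assumption: all rates replaced by $\lambda(\hat a(t))$ and $\mu(\hat a(t))$. Homogeneity assumption: the sets $S_i=\{z\in\{0,1\}^n:\#\{1\le j\le k:z_j=1\}=i\}$ are aggregated into $k+1$ states of a Markov chain with rates $i\to i+1$: $(k-i)\lambda(\hat a(t))$, $i\to i-1$: $i\mu(\hat a(t))$. $\approx$ denotes equality under these assumptions. *)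

theory Defs
  imports "HOL-Probability.Probability"
begin

definition up_rate :: "nat \<Rightarrow> real \<Rightarrow> nat \<Rightarrow> real" where
  "up_rate k l i = (if i < k then real (k - i) * l else 0)"

definition down_rate :: "nat \<Rightarrow> real \<Rightarrow> nat \<Rightarrow> real" where
  "down_rate k m i = (if 1 \<le> i \<and> i < k then real i * m else 0)"

definition forward_rhs ::
  "nat \<Rightarrow> real \<Rightarrow> real \<Rightarrow> (nat \<Rightarrow> real) \<Rightarrow> nat \<Rightarrow> real" where
  "forward_rhs k l m q j =
     (if 1 \<le> j then up_rate k l (j - 1) * q (j - 1) else 0)
   + (if j + 1 \<le> k then down_rate k m (j + 1) * q (j + 1) else 0)
   - (up_rate k l j + down_rate k m j) * q j"

definition kolmogorov_forward_solution ::
  "nat \<Rightarrow> (real \<Rightarrow> real) \<Rightarrow> (real \<Rightarrow> real) \<Rightarrow> (nat \<Rightarrow> real \<Rightarrow> real) \<Rightarrow> bool" where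
  "kolmogorov_forward_solution k L M p \<longleftrightarrow>
     p 0 0 = 1 \<and> (\<forall>j\<in>{1..k}. p j 0 = 0) \<and>
     (\<forall>j\<le>k. \<forall>t\<ge>0. (p j has_real_derivative
         forward_rhs k (L t) (M t) (\<lambda>i. p i t) j) (at t within {0..}))"

text \<open>Hitting time of state k (value \<infinity> if never hit).\<close>

definition hitting_time :: "nat \<Rightarrow> (real \<Rightarrow> nat) \<Rightarrow> ereal" where
  "hitting_time k x = Inf (ereal ` {s. 0 \<le> s \<and> x s = k})"

end

theory Submission
  imports Defs
begin

theorem theorem2:
  fixes k :: nat
    and lam mu ahat :: "real \<Rightarrow> real"
    and p :: "nat \<Rightarrow> real \<Rightarrow> real"
    and M :: "'w measure"
    and X :: "'w \<Rightarrow> real \<Rightarrow> nat"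
    and t :: real
  assumes k: "k \<ge> 1"
    and lam_nonneg: "\<And>a. 0 \<le> a \<Longrightarrow> a \<le> 1 \<Longrightarrow> 0 \<le> lam a"
    and mu_nonneg: "\<And>a. 0 \<le> a \<Longrightarrow> a \<le> 1 \<Longrightarrow> 0 \<le> mu a"
    and lam_decr: "\<And>a b. 0 \<le> a \<Longrightarrow> a \<le> b \<Longrightarrow> b \<le> 1 \<Longrightarrow> lam b \<le> lam a"
    and mu_incr: "\<And>a b. 0 \<le> a \<Longrightarrow> a \<le> b \<Longrightarrow> b \<le> 1 \<Longrightarrow> mu a \<le> mu b"
    and ahat_range: "\<And>s. 0 \<le> s \<Longrightarrow> 0 \<le> ahat s \<and> ahat s \<le> 1"
    and forward: "kolmogorov_forward_solution k (\<lambda>s. lam (ahat s)) (\<lambda>s. mu (ahat s)) p"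
    and prob: "prob_space M"
    and X_range: "\<And>\<omega> s. \<omega> \<in> space M \<Longrightarrow> 0 \<le> s \<Longrightarrow> X \<omega> s \<le> k"
    and X_meas: "\<And>s j. 0 \<le> s \<Longrightarrow> {\<omega> \<in> space M. X \<omega> s = j} \<in> sets M"
    and X_marginal: "\<And>s j. 0 \<le> s \<Longrightarrow> j \<le> k \<Longrightarrow>
                        measure M {\<omega> \<in> space M. X \<omega> s = j} = p j s"
    and X_absorb: "\<And>\<omega> s u. \<omega> \<in> space M \<Longrightarrow> 0 \<le> s \<Longrightarrow> s \<le> u \<Longrightarrow>
                        X \<omega> s = k \<Longrightarrow> X \<omega> u = k"
    and X_rcont: "\<And>\<omega> s. \<omega> \<in> space M \<Longrightarrow> 0 \<le> s \<Longrightarrow>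
                        eventually (\<lambda>u. X \<omega> u = X \<omega> s) (at_right s)"
    and t: "0 \<le> t"
    and not_absorbed: "p k t < 1"
  shows "((\<lambda>\<Delta>. (1 / \<Delta>) *
            (measure M {\<omega> \<in> space M. hitting_time k (X \<omega>) \<le> ereal (t + \<Delta>)
                                    \<and> hitting_time k (X \<omega>) \<ge> ereal t}
             / measure M {\<omega> \<in> space M. hitting_time k (X \<omega>) \<ge> ereal t}))
          \<longlongrightarrow> lam (ahat t) * p (k - 1) t / (1 - p k t)) (at_right 0)"
proof -
  interpret P: prob_space M by (rule prob)
  define \<tau> where "\<tau> \<omega> = hitting_time k (X \<omega>)" for \<omega>
  define A where "A s = {\<omega> \<in> space M. X \<omega> s = k}" for s
  have tau_nonneg: "0 \<le> \<tau> \<omega>" for \<omega>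
    unfolding \<tau>_def hitting_time_def by (auto intro!: Inf_greatest)
  have L1: "\<tau> \<omega> \<le> ereal s \<longleftrightarrow> X \<omega> s = k" if \<omega>: "\<omega> \<in> space M" and s: "0 \<le> s" for \<omega> s
  proof
    assume "X \<omega> s = k"
    then show "\<tau> \<omega> \<le> ereal s" unfolding \<tau>_def hitting_time_def using s
      by (auto intro!: Inf_lower)
  next
    assume le: "\<tau> \<omega> \<le> ereal s"
    show "X \<omega> s = k"
    proof (rule ccontr)
      assume ne: "X \<omega> s \<noteq> k"
      from X_rcont[OF \<omega> s] obtain b where b: "b > s" and bb: "\<And>u. s < u \<Longrightarrow> u < b \<Longrightarrow> X \<omega> u = X \<omega> s"
        unfolding eventually_at_right_field by auto
      have "ereal b \<le> \<tau> \<omega>" unfolding \<tau>_def hitting_time_def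
      proof (rule Inf_greatest)
        fix y assume "y \<in> ereal ` {s. 0 \<le> s \<and> X \<omega> s = k}"
        then obtain x where y: "y = ereal x" and x: "0 \<le> x" "X \<omega> x = k" by auto
        have "\<not> x \<le> s" using X_absorb[OF \<omega> x(1) _ x(2), of s] ne by auto
        moreover have "\<not> (s < x \<and> x < b)" using bb[of x] x ne by auto
        ultimately show "ereal b \<le> y" unfolding y by auto
      qed
      then have "ereal b \<le> ereal s" using le by (rule order_trans)
      with b show False by simp
    qed
  qed
  have A_meas: "A s \<in> sets M" if "0 \<le> s" for s using X_meas[OF that] unfolding A_def .
  have A_meas': "measure M (A s) = p k s" if "0 \<le> s" for s using X_marginal[OF that] unfolding A_def by simp
  define B where "B n = {\<omega> \<in> space M. \<tau> \<omega> \<le> ereal (t - 1 / Suc n)}" for n :: nat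
  define C where "C = {\<omega> \<in> space M. \<tau> \<omega> < ereal t}"
  have B_eq: "B n = (if 0 \<le> t - 1 / Suc n then A (t - 1 / Suc n) else {})" for n
  proof (cases "0 \<le> t - 1 / Suc n")
    case True then show ?thesis unfolding B_def A_def using L1 by auto
  next
    case False
    have "\<not> \<tau> \<omega> \<le> ereal (t - 1 / Suc n)" for \<omega>
    proof
      assume "\<tau> \<omega> \<le> ereal (t - 1 / Suc n)"
      with tau_nonneg[of \<omega>] have "ereal 0 \<le> ereal (t - 1 / Suc n)" by (metis order_trans zero_ereal_def)
      with False show False by simp
    qed
    then show ?thesis using False unfolding B_def by auto
  qed
  have B_meas: "B n \<in> sets M" for n using B_eq[of n] A_meas by auto
  have C_eq: "C = (\<Union>n. B n)"
  proof
    show "(\<Union>n. B n) \<subseteq> C" unfolding B_def C_def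
    proof clarify
      fix \<omega> n assume "\<omega> \<in> space M" "\<tau> \<omega> \<le> ereal (t - 1 / Suc n)"
      moreover have "ereal (t - 1 / Suc n) < ereal t" by simp
      ultimately show "\<tau> \<omega> < ereal t" by (meson le_less_trans)
    qed
  next
    show "C \<subseteq> (\<Union>n. B n)" unfolding B_def C_def
    proof clarify
      fix \<omega> assume \<omega>: "\<omega> \<in> space M" and lt: "\<tau> \<omega> < ereal t"
      from tau_nonneg[of \<omega>] lt obtain r where r: "\<tau> \<omega> = ereal r"
        by (cases "\<tau> \<omega>") auto
      with lt have "0 < t - r" by simp
      then obtain n where n: "1 / real (Suc n) < t - r" using reals_Archimedean[of "t - r"]
        by (auto simp: inverse_eq_divide)
      then have "\<tau> \<omega> \<le> ereal (t - 1 / Suc n)" using r by simp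
      with \<omega> show "\<omega> \<in> (\<Union>n. {\<omega> \<in> space M. \<tau> \<omega> \<le> ereal (t - 1 / real (Suc n))})" by auto
    qed
  qed
  have C_meas: "C \<in> sets M" unfolding C_eq using B_meas by auto
  have C_sub: "C \<subseteq> A s" if "t \<le> s" for s
  proof
    fix \<omega> assume "\<omega> \<in> C"
    then have \<omega>: "\<omega> \<in> space M" and lt: "\<tau> \<omega> < ereal t" unfolding C_def by auto
    have "\<tau> \<omega> \<le> ereal s" using lt that by (meson dual_order.trans ereal_less_eq(3) less_imp_le)
    with L1[OF \<omega>] that t show "\<omega> \<in> A s" using \<omega> unfolding A_def by auto
  qed
  have derivk: "(p k has_real_derivative lam (ahat t) * p (k - 1) t) (at t within {0..})"
  proof -
    from forward t have "(p k has_real_derivative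
         forward_rhs k (lam (ahat t)) (mu (ahat t)) (\<lambda>i. p i t) k) (at t within {0..})"
      unfolding kolmogorov_forward_solution_def by auto
    moreover have "forward_rhs k (lam (ahat t)) (mu (ahat t)) (\<lambda>i. p i t) k = lam (ahat t) * p (k - 1) t"
      using k unfolding forward_rhs_def up_rate_def down_rate_def by simp
    ultimately show ?thesis by simp
  qed
  have pk0: "p k 0 = 0" using forward k unfolding kolmogorov_forward_solution_def by auto
  have measC: "measure M C = p k t"
  proof -
    have lim: "(\<lambda>n. measure M (B n)) \<longlonglongrightarrow> p k t"
    proof (cases "t = 0")
      case True
      then have "B n = {}" for n using B_eq[of n] by simp
      then show ?thesis using True pk0 by simp
    next
      case False
      with t have tpos: "t > 0" by simp
      have cont: "(p k \<longlongrightarrow> p k t) (at t within {0..})"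
        using DERIV_continuous[OF derivk] by (simp add: continuous_within)
      have seq: "(\<lambda>n. t - 1 / real (Suc n)) \<longlonglongrightarrow> t"
        using tendsto_diff[OF tendsto_const LIMSEQ_inverse_real_of_nat, of t]
        by (simp add: inverse_eq_divide)
      have ev: "eventually (\<lambda>n. 0 \<le> t - 1 / real (Suc n)) sequentially"
      proof -
        obtain n0 where "1 / real (Suc n0) < t" using reals_Archimedean[OF tpos]
          by (auto simp: inverse_eq_divide)
        then have "\<forall>n\<ge>n0. 0 \<le> t - 1 / real (Suc n)"
          by (smt (verit, ccfv_SIG) frac_le le_SucI not_less_eq_eq of_nat_0_less_iff of_nat_mono zero_less_Suc)
        then show ?thesis unfolding eventually_sequentially by auto
      qed
      have flt: "filterlim (\<lambda>n. t - 1 / real (Suc n)) (at t within {0..}) sequentially"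
        unfolding filterlim_at using seq ev by (auto elim: eventually_mono)
      have "(\<lambda>n. p k (t - 1 / real (Suc n))) \<longlonglongrightarrow> p k t"
        by (rule filterlim_compose[OF cont flt])
      then show ?thesis
      proof (rule Lim_transform_eventually)
        show "\<forall>\<^sub>F n in sequentially. p k (t - 1 / real (Suc n)) = measure M (B n)"
          using ev by (rule eventually_mono) (simp add: B_eq A_meas')
      qed
    qed
    have up: "measure M C \<le> p k t"
      using P.finite_measure_mono[OF C_sub[of t] A_meas[OF t]] A_meas'[OF t] by simp
    have low: "measure M (B n) \<le> measure M C" for n
      using P.finite_measure_mono[OF _ C_meas, of "B n"] C_eq by auto
    have "p k t \<le> measure M C" using lim low by (intro LIMSEQ_le_const2[OF lim]) auto
    with up show ?thesis by simp
  qed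
  define D where "D = lam (ahat t) * p (k - 1) t"
  have Dset: "{\<omega> \<in> space M. hitting_time k (X \<omega>) \<ge> ereal t} = space M - C"
    unfolding C_def \<tau>_def by auto
  have measD: "measure M {\<omega> \<in> space M. hitting_time k (X \<omega>) \<ge> ereal t} = 1 - p k t"
    unfolding Dset using P.prob_compl[OF C_meas] measC by simp
  have Nset: "{\<omega> \<in> space M. hitting_time k (X \<omega>) \<le> ereal (t + \<Delta>) \<and> hitting_time k (X \<omega>) \<ge> ereal t}
      = A (t + \<Delta>) - C" if "0 < \<Delta>" for \<Delta>
    using L1[of _ "t + \<Delta>"] that t unfolding A_def C_def \<tau>_def by auto
  have measN: "measure M {\<omega> \<in> space M. hitting_time k (X \<omega>) \<le> ereal (t + \<Delta>) \<and> hitting_time k (X \<omega>) \<ge> ereal t}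
      = p k (t + \<Delta>) - p k t" if "0 < \<Delta>" for \<Delta>
    unfolding Nset[OF that]
    using P.finite_measure_Diff[OF A_meas C_meas C_sub, of "t + \<Delta>"] that t A_meas'[of "t + \<Delta>"] measC
    by simp
  have d1: "(p k has_real_derivative D) (at t within {t<..})"
    unfolding D_def by (rule DERIV_subset[OF derivk]) (use t in auto)
  have "((\<lambda>y. (p k y - p k t) / (y - t)) \<longlongrightarrow> D) (at_right t)"
    using d1 unfolding has_field_derivative_iff .
  then have "((\<lambda>x. (p k (x + t) - p k t) / (x + t - t)) \<longlongrightarrow> D) (at_right 0)"
    unfolding filterlim_at_right_to_0[of _ _ t] by simp
  then have lim2: "((\<lambda>x. (p k (x + t) - p k t) / (x + t - t) / (1 - p k t)) \<longlongrightarrow> D / (1 - p k t)) (at_right 0)"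
    using not_absorbed by (intro tendsto_divide tendsto_const) auto
  show ?thesis
    unfolding D_def[symmetric]
  proof (rule Lim_transform_eventually[OF lim2])
    show "\<forall>\<^sub>F x in at_right 0. (p k (x + t) - p k t) / (x + t - t) / (1 - p k t) =
       1 / x * (measure M {\<omega> \<in> space M. hitting_time k (X \<omega>) \<le> ereal (t + x) \<and> ereal t \<le> hitting_time k (X \<omega>)} /
          measure M {\<omega> \<in> space M. ereal t \<le> hitting_time k (X \<omega>)})"
      using eventually_at_right_less[of "0::real"]
    proof (rule eventually_mono)
      fix x :: real assume x: "0 < x"
      show "(p k (x + t) - p k t) / (x + t - t) / (1 - p k t) =
       1 / x * (measure M {\<omega> \<in> space M. hitting_time k (X \<omega>) \<le> ereal (t + x) \<and> ereal t \<le> hitting_time k (X \<omega>)} /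
          measure M {\<omega> \<in> space M. ereal t \<le> hitting_time k (X \<omega>)})"
        unfolding measN[OF x] measD by (simp add: add.commute)
    qed
  qed
qed

end
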